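(* Let $\frac{p}{q}\in\mathbb{Q}\cap[0,1)$. Then there exists an integer $k\ge 0$ such that $R^k\!\left(\frac{p}{q}\right)\in\{0,\tfrac12\}$.
   Context: The map $R:[0,1)\to[0,1)$ is defined by $R(s)=\frac{s}{1-2s}-\left\lfloor\frac{s}{1-2s}\right\rfloor$ for $s\in[0,\tfrac12)$ and $R(s)=1-s$ for $s\in[\tfrac12,1)$; $R^k$ denotes the $k$-fold iterate, $R^0$ the identity. *)

theory Defs
  imports Complex_Main
begin

text \<open>The map R on [0,1): R(s) = frac(s/(1-2s)) for s in [0,1/2), R(s) = 1 - s for s in [1/2,1).
  Values outside [0,1) are irrelevant (the interval is invariant).\<close>
definition R :: "real \<Rightarrow> real" where
  "R s = (if s < 1/2 then s / (1 - 2*s) - of_int \<lfloor>s / (1 - 2*s)\<rfloor> else 1 - s)"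

end

theory Submission
  imports Defs
begin

lemma R_step: "(R ^^ Suc k) x = (R ^^ k) (R x)"
  by (simp add: funpow_Suc_right del: funpow.simps)

lemma R_small:
  fixes a :: int and n :: nat
  assumes "0 < a" "2*a < int n"
  shows "R (of_int a / of_nat n) = of_int (a mod (int n - 2*a)) / of_int (int n - 2*a)"
proof -
  define d where "d = int n - 2*a"
  have dpos: "d > 0" using assms d_def by simp
  have npos: "(of_nat n::real) > 0" using assms by simp
  have lt: "of_int a / of_nat n < (1/2::real)"
  proof -
    have "2 * real_of_int a < of_nat n" using assms(2) by linarith
    thus ?thesis using npos by (simp add: field_simps)
  qed
  have eq: "(of_int a / of_nat n) / (1 - 2 * (of_int a / of_nat n)) = (of_int a / of_int d :: real)"
    using npos dpos unfolding d_def by (simp add: field_simps)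
  have fl: "\<lfloor>(of_int a / of_int d :: real)\<rfloor> = a div d"
    by (simp add: floor_divide_of_int_eq)
  have "of_int a / of_int d - of_int (a div d) = (of_int (a mod d) / of_int d :: real)"
  proof -
    have "a = d * (a div d) + a mod d" by simp
    hence "(of_int a::real) = of_int d * of_int (a div d) + of_int (a mod d)"
      by (metis of_int_add of_int_mult)
    thus ?thesis using dpos by (simp add: field_simps)
  qed
  hence "R (of_int a / of_nat n) = of_int (a mod d) / of_int d"
    unfolding R_def using lt eq fl by (simp only: if_True)
  thus ?thesis using d_def by simp
qed

lemma R_big:
  fixes a :: int and n :: nat
  assumes "2*a > int n" "a < int n"
  shows "R (of_int a / of_nat n) = of_int (int n - a) / of_nat n"
proof -
  have npos: "(of_nat n::real) > 0" using assms by simp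
  have "\<not> of_int a / of_nat n < (1/2::real)"
  proof -
    have "2 * real_of_int a > of_nat n" using assms(1) by linarith
    thus ?thesis using npos by (simp add: field_simps)
  qed
  thus ?thesis unfolding R_def using npos by (simp add: field_simps)
qed

lemma main:
  "\<forall>a::int. 0 \<le> a \<longrightarrow> a < int n \<longrightarrow> (\<exists>k::nat. (R ^^ k) (of_int a / of_nat n) \<in> {0, 1/2})"
proof (induction n rule: less_induct)
  case (less n)
  show ?case
  proof (intro allI impI)
    fix a :: int assume a0: "0 \<le> a" and an: "a < int n"
    have small: "\<exists>k. (R ^^ k) (of_int b / of_nat n) \<in> {0, 1/2}"
      if "0 < b" "2*b < int n" for b :: int
    proof -
      define d where "d = int n - 2*b"
      have dpos: "d > 0" using that d_def by simp
      have "nat d < n" using that d_def by simp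
      moreover have "0 \<le> b mod d" "b mod d < int (nat d)" using dpos by auto
      ultimately obtain k where k: "(R ^^ k) (of_int (b mod d) / of_nat (nat d)) \<in> {0, 1/2}"
        using less by blast
      have "of_nat (nat d) = (of_int d :: real)" using dpos by simp
      hence "(R ^^ Suc k) (of_int b / of_nat n) \<in> {0, 1/2}"
        using k R_small[OF that] d_def by (simp only: R_step)
      thus ?thesis by blast
    qed
    consider "a = 0" | "2*a = int n" | "0 < a \<and> 2*a < int n" | "2*a > int n" using a0 by linarith
    thus "\<exists>k. (R ^^ k) (of_int a / of_nat n) \<in> {0, 1/2}"
    proof cases
      case 1 thus ?thesis by (intro exI[of _ 0]) simp
    next
      case 2
      hence "(of_int a / of_nat n :: real) = 1/2"
        using an by (simp add: field_simps)
      thus ?thesis by (intro exI[of _ 0]) simp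
    next
      case 3 thus ?thesis using small by blast
    next
      case 4
      obtain k where k: "(R ^^ k) (of_int (int n - a) / of_nat n) \<in> {0, 1/2}"
        using small[of "int n - a"] 4 an by auto
      have "(R ^^ Suc k) (of_int a / of_nat n) \<in> {0, 1/2}"
        using k R_big[OF 4 an] by (simp only: R_step)
      thus ?thesis by blast
    qed
  qed
qed

theorem lemma3p1:
  fixes x :: real
  assumes "x \<in> \<rat>" and "0 \<le> x" and "x < 1"
  shows "\<exists>k::nat. (R ^^ k) x \<in> {0, 1/2}"
proof -
  obtain a b :: int where b: "b > 0" and x: "x = of_int a / of_int b"
    using assms(1) by (metis Rats_cases')
  have bb: "(of_int b::real) = of_nat (nat b)" using b by simp
  have "0 \<le> a" using assms(2) x b by (simp add: zero_le_divide_iff)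
  moreover have "a < int (nat b)"
  proof -
    have "of_int a < (of_int b::real)" using assms(3) x b by (simp add: divide_less_eq)
    thus ?thesis using b by simp
  qed
  ultimately show ?thesis using main[of "nat b"] x bb by metis
qed

end
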